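(* Let $(V,w,\mu)$ be a simple weighted graph and let $\mathcal V:V\to[0,\infty)$. Then \[\mathcal F^{\mathcal V}=\mathcal F\cap L^2(V,\mathcal V\cdot\mu).\]
   Context: A simple weighted graph $(V,w,\mu)$ consists of a countably infinite set $V$, a symmetric function $w:V\times V\to[0,\infty)$ and a function $\mu:V\to(0,\infty)$. The graph with edges $\{x\sim y:w(x,y)>0\}$ is assumed to be locally finite, connected, and without loops or multiple edges. $C_c(V)$ denotes the finitely supported functions. For a potential $\mathcal V\ge0$, define on $C_c(V)$ \[\mathcal E^{\mathcal V}(u,u)=\frac12\sum_{x,y\in V}w(x,y)(u(x)-u(y))^2+\sum_{x}\mathcal V(x)u(x)^2\mu(x).\] Let $\mathcal F^{\mathcal V}$ be the closure of $C_c(V)$ with respect to the norm $\big(\mathcal E^{\mathcal V}(u,u)+\|u\|^2_{L^2(V,\mu)}\big)^{1/2}$, taken inside the space of $u\in L^2(V,\mu)$ for which that expression is finite. Set $\mathcal F=\mathcal F^{0}$. The measure $\mathcal V\cdot\mu$ is given by $x\mapsto\mathcal V(x)\mu(x)$. *)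

theory Defs
  imports "HOL-Analysis.Analysis"
begin

text \<open>Vertices are the elements of the type 'a (so V = UNIV). Weights w, measure mu.\<close>

definition simple_weighted_graph :: "('a \<Rightarrow> 'a \<Rightarrow> real) \<Rightarrow> ('a \<Rightarrow> real) \<Rightarrow> bool" where
  "simple_weighted_graph w mu \<longleftrightarrow>
     countable (UNIV :: 'a set) \<and> infinite (UNIV :: 'a set) \<and>
     (\<forall>x y. w x y = w y x) \<and> (\<forall>x y. 0 \<le> w x y) \<and>
     (\<forall>x. w x x = 0) \<and>
     (\<forall>x. finite {y. 0 < w x y}) \<and>
     (\<forall>x y. (x, y) \<in> {(a, b). 0 < w a b}\<^sup>*) \<and>
     (\<forall>x. 0 < mu x)"

definition fin_supp :: "('a \<Rightarrow> real) \<Rightarrow> bool" where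
  "fin_supp u \<longleftrightarrow> finite {x. u x \<noteq> 0}"

definition in_L2 :: "('a \<Rightarrow> real) \<Rightarrow> ('a \<Rightarrow> real) \<Rightarrow> bool" where
  "in_L2 m u \<longleftrightarrow> (\<lambda>x. (u x)\<^sup>2 * m x) summable_on UNIV"

definition L2_norm_sq :: "('a \<Rightarrow> real) \<Rightarrow> ('a \<Rightarrow> real) \<Rightarrow> real" where
  "L2_norm_sq m u = (\<Sum>\<^sub>\<infinity>x. (u x)\<^sup>2 * m x)"

definition energy_finite :: "('a \<Rightarrow> 'a \<Rightarrow> real) \<Rightarrow> ('a \<Rightarrow> real) \<Rightarrow> ('a \<Rightarrow> real) \<Rightarrow> ('a \<Rightarrow> real) \<Rightarrow> bool" where
  "energy_finite w mu pot u \<longleftrightarrow>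
     (\<lambda>(x, y). w x y * (u x - u y)\<^sup>2) summable_on UNIV \<and>
     (\<lambda>x. pot x * (u x)\<^sup>2 * mu x) summable_on UNIV"

definition energy :: "('a \<Rightarrow> 'a \<Rightarrow> real) \<Rightarrow> ('a \<Rightarrow> real) \<Rightarrow> ('a \<Rightarrow> real) \<Rightarrow> ('a \<Rightarrow> real) \<Rightarrow> real" where
  "energy w mu pot u =
     (1/2) * infsum (\<lambda>(x, y). w x y * (u x - u y)\<^sup>2) UNIV
     + (\<Sum>\<^sub>\<infinity>x. pot x * (u x)\<^sup>2 * mu x)"

text \<open>F^V: closure of C_c(V) w.r.t. the form norm (E^V(u,u) + ||u||^2)^(1/2),
  taken inside the space of u in L^2(V,mu) with finite E^V(u,u).\<close>
definition form_domain :: "('a \<Rightarrow> 'a \<Rightarrow> real) \<Rightarrow> ('a \<Rightarrow> real) \<Rightarrow> ('a \<Rightarrow> real) \<Rightarrow> ('a \<Rightarrow> real) set" where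
  "form_domain w mu pot =
     {u. in_L2 mu u \<and> energy_finite w mu pot u \<and>
         (\<forall>\<epsilon>>0. \<exists>\<phi>. fin_supp \<phi> \<and>
             sqrt (energy w mu pot (\<lambda>x. u x - \<phi> x) + L2_norm_sq mu (\<lambda>x. u x - \<phi> x)) < \<epsilon>)}"

end

theory Submission
  imports Defs
begin


lemma fin_summable:
  fixes f :: "'b \<Rightarrow> real"
  assumes "finite {x. f x \<noteq> 0}"
  shows "f summable_on A"
proof -
  have "f summable_on (A \<inter> {x. f x \<noteq> 0})" using assms by simp
  then show ?thesis by (subst summable_on_cong_neutral[where g=f and T="A \<inter> {x. f x \<noteq> 0}"]) auto
qed

lemma fin_infsum:
  fixes f :: "'b \<Rightarrow> real"
  assumes "finite F"
  shows "infsum (\<lambda>x. if x \<in> F then f x else 0) UNIV = sum f F"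
proof -
  have "infsum (\<lambda>x. if x \<in> F then f x else 0) UNIV = infsum f F"
    by (rule infsum_cong_neutral) auto
  then show ?thesis using assms by simp
qed

lemma tail_split:
  fixes f :: "'b \<Rightarrow> real"
  assumes "f summable_on UNIV" "finite F"
  shows "infsum (\<lambda>x. if x \<in> F then 0 else f x) UNIV = infsum f UNIV - sum f F"
proof -
  have s1: "f summable_on F" using assms(2) by simp
  have s2: "f summable_on (-F)" using assms(1) summable_on_subset by blast
  have "infsum f UNIV = infsum f (F \<union> -F)" by simp
  also have "\<dots> = infsum f F + infsum f (-F)" by (rule infsum_Un_disjoint[OF s1 s2]) auto
  finally have e: "infsum f UNIV = sum f F + infsum f (-F)" using assms(2) by simp
  have "infsum (\<lambda>x. if x \<in> F then 0 else f x) UNIV = infsum f (-F)"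
    by (rule infsum_cong_neutral) auto
  with e show ?thesis by simp
qed

lemma tail_summable:
  fixes f :: "'b \<Rightarrow> real"
  assumes "f summable_on UNIV"
  shows "(\<lambda>x. if x \<in> F then 0 else f x) summable_on UNIV"
proof -
  have s2: "f summable_on (-F)" using assms(1) summable_on_subset by blast
  show ?thesis by (subst summable_on_cong_neutral[where g=f and T="-F"]) (auto simp: s2)
qed

lemma tail_small:
  fixes f :: "'b \<Rightarrow> real"
  assumes "f summable_on UNIV" "\<eta> > 0"
  shows "\<exists>F. finite F \<and> infsum (\<lambda>x. if x \<in> F then 0 else f x) UNIV \<le> \<eta>"
proof -
  obtain F where F: "finite F" "dist (sum f F) (infsum f UNIV) \<le> \<eta>"
    using infsum_finite_approximation[OF assms] by blast
  then show ?thesis using tail_split[OF assms(1) F(1)] by (auto simp: dist_real_def)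
qed

lemma single_le:
  fixes f :: "'b \<Rightarrow> real"
  assumes "f summable_on UNIV" "\<And>x. f x \<ge> 0"
  shows "f x \<le> infsum f UNIV"
  using finite_sum_le_infsum[OF assms(1), of "{x}"] assms by auto


definition med :: "real \<Rightarrow> real \<Rightarrow> real" where
  "med d u = max (min d (max 0 u)) (min 0 u)"
lemma sq1: "((a::real) - b)\<^sup>2 \<le> 2*(a\<^sup>2 + b\<^sup>2)"
proof -
  have "(a-b)\<^sup>2 + (a+b)\<^sup>2 = 2*(a\<^sup>2+b\<^sup>2)" by (simp add: power2_eq_square algebra_simps)
  moreover have "0 \<le> (a+b)\<^sup>2" by simp
  ultimately show ?thesis by linarith
qed
lemma sq2: "((a::real) + b)\<^sup>2 \<le> 2*(a\<^sup>2 + b\<^sup>2)"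
  using sq1[of a "-b"] by simp
lemma med_abs_d: "\<bar>med d u\<bar> \<le> \<bar>d\<bar>" unfolding med_def by (simp add: abs_if max_def min_def)
lemma med_abs_u: "\<bar>med d u\<bar> \<le> \<bar>u\<bar>" unfolding med_def by (simp add: abs_if max_def min_def)
lemma med_le_d: "(med d u)\<^sup>2 \<le> d\<^sup>2"
  using med_abs_d abs_le_square_iff by blast
lemma med_le_u: "(med d u)\<^sup>2 \<le> u\<^sup>2"
  using med_abs_u abs_le_square_iff by blast
lemma med_same: "med u u = u"
  unfolding med_def by auto
lemma med_lip: "\<bar>med d1 u1 - med d2 u2\<bar> \<le> \<bar>d1 - d2\<bar> + \<bar>u1 - u2\<bar>"
  unfolding med_def by (auto simp: max_def min_def)
lemma med_diff1: "(med d1 u1 - med d2 u2)\<^sup>2 \<le> 2*(d1 - d2)\<^sup>2 + 2*(u1 - u2)\<^sup>2"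
proof -
  have "\<bar>med d1 u1 - med d2 u2\<bar> \<le> \<bar>\<bar>d1 - d2\<bar> + \<bar>u1 - u2\<bar>\<bar>"
    using med_lip[of d1 u1 d2 u2] by simp
  hence "(med d1 u1 - med d2 u2)\<^sup>2 \<le> (\<bar>d1 - d2\<bar> + \<bar>u1 - u2\<bar>)\<^sup>2"
    using abs_le_square_iff by blast
  also have "\<dots> \<le> 2*(\<bar>d1 - d2\<bar>\<^sup>2 + \<bar>u1 - u2\<bar>\<^sup>2)" by (rule sq2)
  finally show ?thesis by simp
qed
lemma med_diff2: "(med d1 u1 - med d2 u2)\<^sup>2 \<le> 2*(d1\<^sup>2 + d2\<^sup>2)"
proof -
  have a: "(med d1 u1)\<^sup>2 \<le> d1\<^sup>2" "(med d2 u2)\<^sup>2 \<le> d2\<^sup>2" by (rule med_le_d)+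
  have "(med d1 u1 - med d2 u2)\<^sup>2 \<le> 2*((med d1 u1)\<^sup>2 + (med d2 u2)\<^sup>2)" by (rule sq1)
  moreover have "2*((med d1 u1)\<^sup>2 + (med d2 u2)\<^sup>2) \<le> 2*(d1\<^sup>2 + d2\<^sup>2)" using a by simp
  ultimately show ?thesis by (rule order_trans)
qed
lemma main:
  fixes w :: "'a \<Rightarrow> 'a \<Rightarrow> real" and mu pot u :: "'a \<Rightarrow> real"
  assumes wsym: "\<And>x y. w x y = w y x" and wnn: "\<And>x y. 0 \<le> w x y"
    and lf: "\<And>x. finite {y. 0 < w x y}" and mup: "\<And>x. 0 < mu x" and potnn: "\<And>x. 0 \<le> pot x"
    and uL2: "(\<lambda>x. (u x)\<^sup>2 * mu x) summable_on UNIV"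
    and uE: "(\<lambda>(x,y). w x y * (u x - u y)\<^sup>2) summable_on UNIV"
    and uP: "(\<lambda>x. pot x * (u x)\<^sup>2 * mu x) summable_on UNIV"
    and approx: "\<And>\<delta>. \<delta>>0 \<Longrightarrow> \<exists>\<phi>. fin_supp \<phi> \<and> energy w mu (\<lambda>_. 0) (\<lambda>x. u x - \<phi> x) + L2_norm_sq mu (\<lambda>x. u x - \<phi> x) < \<delta>"
    and epos: "\<epsilon> > 0"
  shows "\<exists>\<psi>. fin_supp \<psi> \<and> energy w mu pot (\<lambda>x. u x - \<psi> x) + L2_norm_sq mu (\<lambda>x. u x - \<psi> x) < \<epsilon>"
proof -
  define \<eta> where "\<eta> = \<epsilon>/8"
  have eta: "\<eta> > 0" using epos by (simp add: \<eta>_def)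
  define fP where "fP = (\<lambda>x. pot x * (u x)\<^sup>2 * mu x)"
  obtain K where K: "finite K" "infsum (\<lambda>x. if x \<in> K then 0 else fP x) UNIV \<le> \<eta>"
    using tail_small[OF uP[folded fP_def] eta] by blast
  define fE where "fE = (\<lambda>(x,y). w x y * (u x - u y)\<^sup>2)"
  obtain S where S: "finite S" "infsum (\<lambda>p. if p \<in> S then 0 else fE p) UNIV \<le> \<eta>"
    using tail_small[OF uE[folded fE_def] eta] by blast
  define P where "P = sum pot K + 1"
  define Q0 where "Q0 = (\<Sum>p\<in>S. w (fst p) (snd p) * (1/mu (fst p) + 1/mu (snd p)))"
  define Q where "Q = Q0 + 1"
  have P: "P > 0" unfolding P_def using sum_nonneg[of K pot] potnn by (simp add: add_nonneg_pos)
  have Q00: "Q0 \<ge> 0" unfolding Q0_def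
  proof (rule sum_nonneg)
    fix p :: "'a \<times> 'a"
    have "0 \<le> 1/mu (fst p)" "0 \<le> 1/mu (snd p)" using mup by (simp_all add: less_imp_le)
    then show "0 \<le> w (fst p) (snd p) * (1/mu (fst p) + 1/mu (snd p))" by (simp add: wnn)
  qed
  hence Q: "Q > 0" by (simp add: Q_def)
  define \<delta> where "\<delta> = \<epsilon> / (4*(3+P+Q))"
  have dpos: "\<delta> > 0" using P Q epos by (simp add: \<delta>_def)
  obtain \<phi> where phi: "fin_supp \<phi>" and small: "energy w mu (\<lambda>_. 0) (\<lambda>x. u x - \<phi> x) + L2_norm_sq mu (\<lambda>x. u x - \<phi> x) < \<delta>"
    using approx[OF dpos] by blast
  define d where "d = (\<lambda>x. u x - \<phi> x)"
  define n where "n = L2_norm_sq mu d"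
  define Ed where "Ed = infsum (\<lambda>(x,y). w x y * (d x - d y)\<^sup>2) UNIV"
  have en0: "energy w mu (\<lambda>_. 0) d = Ed/2" by (simp add: energy_def Ed_def)
  have n0: "n \<ge> 0" unfolding n_def L2_norm_sq_def
    by (rule infsum_nonneg) (simp add: mup less_imp_le)
  have Ed0: "Ed \<ge> 0" unfolding Ed_def
    by (rule infsum_nonneg) (simp add: wnn split: prod.splits)
  have sm: "Ed/2 + n < \<delta>" using small en0 by (simp add: n_def d_def)
  have finphi: "finite {x. \<phi> x \<noteq> 0}" using phi by (simp add: fin_supp_def)
  have dL2: "(\<lambda>x. (d x)\<^sup>2 * mu x) summable_on UNIV"
  proof (rule summable_on_comparison_test)
    have a: "(\<lambda>x. 2 * ((u x)\<^sup>2 * mu x)) summable_on UNIV" using uL2 by (rule summable_on_cmult_right)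
    have b: "(\<lambda>x. 2 * ((\<phi> x)\<^sup>2 * mu x)) summable_on UNIV"
      by (rule fin_summable, rule finite_subset[OF _ finphi]) auto
    show "(\<lambda>x. 2 * ((u x)\<^sup>2 * mu x) + 2 * ((\<phi> x)\<^sup>2 * mu x)) summable_on UNIV"
      using summable_on_add[OF a b] .
    fix x
    have "(d x)\<^sup>2 \<le> 2 * (u x)\<^sup>2 + 2 * (\<phi> x)\<^sup>2" unfolding d_def
      using sq1 by simp
    hence "(d x)\<^sup>2 * mu x \<le> (2 * (u x)\<^sup>2 + 2 * (\<phi> x)\<^sup>2) * mu x"
      using mup[of x] by (simp add: mult_right_mono)
    then show "(d x)\<^sup>2 * mu x \<le> 2 * ((u x)\<^sup>2 * mu x) + 2 * ((\<phi> x)\<^sup>2 * mu x)"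
      by (simp add: algebra_simps)
    show "0 \<le> (d x)\<^sup>2 * mu x" using mup[of x] by simp
  qed
  have dE: "(\<lambda>(x,y). w x y * (d x - d y)\<^sup>2) summable_on UNIV"
  proof (rule summable_on_comparison_test)
    have a: "(\<lambda>p. 2 * fE p) summable_on UNIV" using uE[folded fE_def] by (rule summable_on_cmult_right)
    define B where "B = (\<Union>x\<in>{x. \<phi> x \<noteq> 0}. {x} \<times> {y. 0 < w x y}) \<union> (\<Union>y\<in>{x. \<phi> x \<noteq> 0}. {x. 0 < w y x} \<times> {y})"
    have Bfin: "finite B" unfolding B_def using finphi lf by auto
    have b: "(\<lambda>p. 2 * (case p of (x,y) \<Rightarrow> w x y * (\<phi> x - \<phi> y)\<^sup>2)) summable_on UNIV"
    proof (rule fin_summable, rule finite_subset[OF _ Bfin])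
      show "{p. 2 * (case p of (x,y) \<Rightarrow> w x y * (\<phi> x - \<phi> y)\<^sup>2) \<noteq> 0} \<subseteq> B"
      proof
        fix p assume "p \<in> {p. 2 * (case p of (x,y) \<Rightarrow> w x y * (\<phi> x - \<phi> y)\<^sup>2) \<noteq> 0}"
        then obtain x y where p: "p = (x,y)" and ne: "w x y \<noteq> 0" "\<phi> x \<noteq> \<phi> y" by (cases p) auto
        have wp: "0 < w x y" "0 < w y x" using ne wnn[of x y] wsym[of x y] by auto
        show "p \<in> B"
        proof (cases "\<phi> x = 0")
          case True
          then have "\<phi> y \<noteq> 0" using ne by auto
          then show ?thesis using p wp unfolding B_def by blast
        next
          case False
          then show ?thesis using p wp unfolding B_def by blast
        qed
      qed
    qed
    show "(\<lambda>p. 2 * fE p + 2 * (case p of (x,y) \<Rightarrow> w x y * (\<phi> x - \<phi> y)\<^sup>2)) summable_on UNIV"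
      using summable_on_add[OF a b] .
    fix p :: "'a \<times> 'a"
    obtain x y where p: "p = (x,y)" by (cases p)
    have "(d x - d y)\<^sup>2 \<le> 2 * (u x - u y)\<^sup>2 + 2 * (\<phi> x - \<phi> y)\<^sup>2"
    proof -
      have eq: "d x - d y = (u x - u y) - (\<phi> x - \<phi> y)" by (simp add: d_def)
      show ?thesis unfolding eq using sq1[of "u x - u y" "\<phi> x - \<phi> y"] by simp
    qed
    hence "w x y * (d x - d y)\<^sup>2 \<le> w x y * (2 * (u x - u y)\<^sup>2 + 2 * (\<phi> x - \<phi> y)\<^sup>2)"
      using wnn[of x y] by (simp add: mult_left_mono)
    then show "(case p of (x,y) \<Rightarrow> w x y * (d x - d y)\<^sup>2) \<le> 2 * fE p + 2 * (case p of (x,y) \<Rightarrow> w x y * (\<phi> x - \<phi> y)\<^sup>2)"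
      by (simp add: p fE_def algebra_simps)
    show "0 \<le> (case p of (x,y) \<Rightarrow> w x y * (d x - d y)\<^sup>2)" using wnn[of x y] by (simp add: p)
  qed
  have dpt: "\<And>x. (d x)\<^sup>2 \<le> n / mu x"
  proof -
    fix x
    have "(d x)\<^sup>2 * mu x \<le> n" unfolding n_def L2_norm_sq_def
      by (rule single_le[OF dL2]) (simp add: mup less_imp_le)
    then show "(d x)\<^sup>2 \<le> n / mu x" using mup[of x] by (simp add: pos_le_divide_eq)
  qed
  define g where "g = (\<lambda>x. med (d x) (u x))"
  define \<psi> where "\<psi> = (\<lambda>x. u x - g x)"
  have psi: "fin_supp \<psi>"
  proof -
    have "{x. \<psi> x \<noteq> 0} \<subseteq> {x. \<phi> x \<noteq> 0}"
      by (auto simp: \<psi>_def g_def d_def med_same)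
    then show ?thesis using finphi finite_subset by (auto simp: fin_supp_def)
  qed
  have ug: "(\<lambda>x. u x - \<psi> x) = g" by (simp add: \<psi>_def)
  have gL2: "(\<lambda>x. (g x)\<^sup>2 * mu x) summable_on UNIV"
    by (rule summable_on_comparison_test[OF uL2])
       (auto simp: g_def med_le_u mup less_imp_le mult_right_mono)
  have NG: "L2_norm_sq mu g \<le> n" unfolding L2_norm_sq_def n_def
    by (rule infsum_mono[OF gL2 dL2]) (auto simp: g_def med_le_d mup less_imp_le mult_right_mono)
  define hK where "hK = (\<lambda>x. if x \<in> K then pot x * (d x)\<^sup>2 * mu x else 0)"
  define tK where "tK = (\<lambda>x. if x \<in> K then 0 else fP x)"
  have hKs: "hK summable_on UNIV"
    by (rule fin_summable, rule finite_subset[OF _ K(1)]) (auto simp: hK_def)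
  have tKs: "tK summable_on UNIV" unfolding tK_def by (rule tail_summable[OF uP[folded fP_def]])
  have ptw: "\<And>x. pot x * (g x)\<^sup>2 * mu x \<le> hK x + tK x"
  proof -
    fix x
    have m: "0 \<le> pot x * mu x" using potnn[of x] mup[of x] by simp
    have "pot x * (g x)\<^sup>2 * mu x = (pot x * mu x) * (g x)\<^sup>2" by simp
    moreover have "(pot x * mu x) * (g x)\<^sup>2 \<le> (pot x * mu x) * (d x)\<^sup>2"
      using m med_le_d by (simp add: g_def mult_left_mono)
    moreover have "(pot x * mu x) * (g x)\<^sup>2 \<le> (pot x * mu x) * (u x)\<^sup>2"
      using m med_le_u by (simp add: g_def mult_left_mono)
    moreover have "0 \<le> hK x" "0 \<le> tK x" using potnn[of x] mup[of x]
      by (auto simp: hK_def tK_def fP_def less_imp_le)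
    ultimately show "pot x * (g x)\<^sup>2 * mu x \<le> hK x + tK x"
      by (auto simp: hK_def tK_def fP_def algebra_simps)
  qed
  have gP: "(\<lambda>x. pot x * (g x)\<^sup>2 * mu x) summable_on UNIV"
    by (rule summable_on_comparison_test[OF summable_on_add[OF hKs tKs]])
       (use ptw potnn mup in \<open>auto intro!: mult_nonneg_nonneg simp: less_imp_le\<close>)
  have PG: "infsum (\<lambda>x. pot x * (g x)\<^sup>2 * mu x) UNIV \<le> P * n + \<eta>"
  proof -
    have "infsum (\<lambda>x. pot x * (g x)\<^sup>2 * mu x) UNIV \<le> infsum (\<lambda>x. hK x + tK x) UNIV"
      by (rule infsum_mono[OF gP summable_on_add[OF hKs tKs]]) (rule ptw)
    also have "\<dots> = infsum hK UNIV + infsum tK UNIV" by (rule infsum_add[OF hKs tKs])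
    also have "infsum hK UNIV = (\<Sum>x\<in>K. pot x * (d x)\<^sup>2 * mu x)"
      unfolding hK_def by (rule fin_infsum[OF K(1)])
    also have "\<dots> \<le> (\<Sum>x\<in>K. pot x * n)"
    proof (rule sum_mono)
      fix x
      have "(d x)\<^sup>2 * mu x \<le> n" using dpt[of x] mup[of x] by (simp add: pos_le_divide_eq)
      then show "pot x * (d x)\<^sup>2 * mu x \<le> pot x * n" using potnn[of x]
        by (metis mult.assoc mult_left_mono)
    qed
    also have "\<dots> = n * sum pot K" by (simp add: sum_distrib_left mult.commute)
    also have "\<dots> \<le> n * P" using n0 by (simp add: P_def distrib_left)
    finally show ?thesis using K(2) by (simp add: tK_def mult.commute)
  qed
  define Dd where "Dd = (\<lambda>p. 2 * (case p of (x,y) \<Rightarrow> w x y * (d x - d y)\<^sup>2))"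
  define hS where "hS = (\<lambda>p. if p \<in> S then 2 * (w (fst p) (snd p) * ((d (fst p))\<^sup>2 + (d (snd p))\<^sup>2)) else 0)"
  define tS where "tS = (\<lambda>p. if p \<in> S then 0 else 2 * fE p)"
  have Dds: "Dd summable_on UNIV" unfolding Dd_def using dE by (rule summable_on_cmult_right)
  have hSs: "hS summable_on UNIV"
    by (rule fin_summable, rule finite_subset[OF _ S(1)]) (auto simp: hS_def)
  have tSs: "tS summable_on UNIV" unfolding tS_def
    by (rule tail_summable, rule summable_on_cmult_right, rule uE[folded fE_def])
  have Ss: "(\<lambda>p. Dd p + hS p + tS p) summable_on UNIV"
    by (rule summable_on_add[OF summable_on_add[OF Dds hSs] tSs])
  have ptE: "\<And>p. (case p of (x,y) \<Rightarrow> w x y * (g x - g y)\<^sup>2) \<le> Dd p + hS p + tS p"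
  proof -
    fix p :: "'a \<times> 'a"
    obtain x y where p: "p = (x,y)" by (cases p)
    have w0: "0 \<le> w x y" by (rule wnn)
    have D0: "0 \<le> Dd p" using w0 by (simp add: Dd_def p)
    have h0: "0 \<le> hS p" using w0 by (simp add: hS_def p)
    have t0: "0 \<le> tS p" using w0 by (simp add: tS_def fE_def p)
    show "(case p of (x,y) \<Rightarrow> w x y * (g x - g y)\<^sup>2) \<le> Dd p + hS p + tS p"
    proof (cases "p \<in> S")
      case True
      have "w x y * (g x - g y)\<^sup>2 \<le> w x y * (2 * ((d x)\<^sup>2 + (d y)\<^sup>2))"
        using w0 med_diff2 by (simp add: g_def mult_left_mono)
      then show ?thesis using True D0 t0 by (simp add: hS_def p algebra_simps)
    next
      case False
      have "w x y * (g x - g y)\<^sup>2 \<le> w x y * (2 * (d x - d y)\<^sup>2 + 2 * (u x - u y)\<^sup>2)"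
        using w0 med_diff1 by (simp add: g_def mult_left_mono)
      then show ?thesis using False h0 by (simp add: Dd_def tS_def fE_def p algebra_simps)
    qed
  qed
  have gEs: "(\<lambda>(x,y). w x y * (g x - g y)\<^sup>2) summable_on UNIV"
    by (rule summable_on_comparison_test[OF Ss ptE]) (auto simp: wnn)
  have EG: "infsum (\<lambda>(x,y). w x y * (g x - g y)\<^sup>2) UNIV \<le> 2 * Ed + 2 * Q * n + 2 * \<eta>"
  proof -
    have "infsum (\<lambda>(x,y). w x y * (g x - g y)\<^sup>2) UNIV \<le> infsum (\<lambda>p. Dd p + hS p + tS p) UNIV"
      by (rule infsum_mono[OF gEs Ss]) (rule ptE)
    also have "\<dots> = infsum Dd UNIV + infsum hS UNIV + infsum tS UNIV"
      by (simp add: infsum_add Dds hSs tSs summable_on_add)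
    also have "infsum Dd UNIV = 2 * Ed" unfolding Dd_def Ed_def
      by (rule infsum_cmult_right) (rule dE)
    also have "infsum tS UNIV = 2 * infsum (\<lambda>p. if p \<in> S then 0 else fE p) UNIV"
    proof -
      have "tS = (\<lambda>p. 2 * (if p \<in> S then 0 else fE p))" by (auto simp: tS_def)
      then show ?thesis
        by (simp add: infsum_cmult_right tail_summable[OF uE[folded fE_def]])
    qed
    also have "infsum hS UNIV = (\<Sum>p\<in>S. 2 * (w (fst p) (snd p) * ((d (fst p))\<^sup>2 + (d (snd p))\<^sup>2)))"
      unfolding hS_def by (rule fin_infsum[OF S(1)])
    also have "\<dots> \<le> (\<Sum>p\<in>S. 2 * n * (w (fst p) (snd p) * (1/mu (fst p) + 1/mu (snd p))))"
    proof (rule sum_mono)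
      fix p :: "'a \<times> 'a"
      have "(d (fst p))\<^sup>2 + (d (snd p))\<^sup>2 \<le> n / mu (fst p) + n / mu (snd p)"
        using dpt by (simp add: add_mono)
      also have "\<dots> = n * (1/mu (fst p) + 1/mu (snd p))" by (simp add: algebra_simps)
      finally have "w (fst p) (snd p) * ((d (fst p))\<^sup>2 + (d (snd p))\<^sup>2) \<le> w (fst p) (snd p) * (n * (1/mu (fst p) + 1/mu (snd p)))"
        using wnn by (simp add: mult_left_mono)
      then have "2 * (w (fst p) (snd p) * ((d (fst p))\<^sup>2 + (d (snd p))\<^sup>2)) \<le> 2 * (w (fst p) (snd p) * (n * (1/mu (fst p) + 1/mu (snd p))))"
        by linarith
      moreover have "2 * (w (fst p) (snd p) * (n * (1/mu (fst p) + 1/mu (snd p)))) = 2 * n * (w (fst p) (snd p) * (1/mu (fst p) + 1/mu (snd p)))"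
        by (simp only: mult_ac)
      ultimately show "2 * (w (fst p) (snd p) * ((d (fst p))\<^sup>2 + (d (snd p))\<^sup>2)) \<le> 2 * n * (w (fst p) (snd p) * (1/mu (fst p) + 1/mu (snd p)))"
        by linarith
    qed
    also have "\<dots> = 2 * n * Q0" by (simp add: Q0_def sum_distrib_left)
    also have "2 * n * Q0 \<le> 2 * Q * n" using n0 by (simp add: Q_def algebra_simps)
    finally show ?thesis using S(2) by linarith
  qed
  have total: "energy w mu pot g + L2_norm_sq mu g \<le> Ed + (Q + P + 1) * n + 2 * \<eta>"
    using EG PG NG by (simp add: energy_def algebra_simps)
  have "(Q + P + 1) * n < (Q + P + 1) * \<delta>"
    using P Q sm Ed0 by (intro mult_strict_left_mono) auto
  moreover have "Ed + (Q + P + 1) * \<delta> \<le> (3 + P + Q) * \<delta>" using sm n0 by (simp add: algebra_simps)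
  moreover have "(3 + P + Q) * \<delta> = \<epsilon>/4" using P Q by (simp add: \<delta>_def field_simps)
  ultimately have "energy w mu pot g + L2_norm_sq mu g < \<epsilon>"
    using total eta by (simp add: \<eta>_def)
  then show ?thesis using psi ug by auto
qed


theorem lemma2p2:
  fixes w :: "'a \<Rightarrow> 'a \<Rightarrow> real" and mu pot :: "'a \<Rightarrow> real"
  assumes "simple_weighted_graph w mu"
    and "\<forall>x. 0 \<le> pot x"
  shows "form_domain w mu pot
         = form_domain w mu (\<lambda>_. 0) \<inter> {u. in_L2 (\<lambda>x. pot x * mu x) u}"
proof -
  have wsym: "\<And>x y. w x y = w y x" and wnn: "\<And>x y. 0 \<le> w x y"
    and lf: "\<And>x. finite {y. 0 < w x y}" and mup: "\<And>x. 0 < mu x"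
    using assms(1) by (simp_all add: simple_weighted_graph_def)
  have potnn: "\<And>x. 0 \<le> pot x" using assms(2) by simp
  have eqP: "(\<lambda>x. (u x)\<^sup>2 * (pot x * mu x)) = (\<lambda>x. pot x * (u x)\<^sup>2 * mu x)" for u :: "'a \<Rightarrow> real"
    by (simp add: algebra_simps)
  show ?thesis
  proof (intro equalityI subsetI)
    fix u assume u: "u \<in> form_domain w mu pot"
    have L2: "in_L2 mu u" and ef: "energy_finite w mu pot u"
      and ap: "\<forall>\<epsilon>>0. \<exists>\<phi>. fin_supp \<phi> \<and>
             sqrt (energy w mu pot (\<lambda>x. u x - \<phi> x) + L2_norm_sq mu (\<lambda>x. u x - \<phi> x)) < \<epsilon>"
      using u by (simp_all add: form_domain_def)
    have le: "energy w mu (\<lambda>_. 0) v \<le> energy w mu pot v" for v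
      unfolding energy_def
      using infsum_nonneg[of UNIV "\<lambda>x. pot x * (v x)\<^sup>2 * mu x"] potnn mup
      by (simp add: less_imp_le)
    have ap0: "\<forall>\<epsilon>>0. \<exists>\<phi>. fin_supp \<phi> \<and>
             sqrt (energy w mu (\<lambda>_. 0) (\<lambda>x. u x - \<phi> x) + L2_norm_sq mu (\<lambda>x. u x - \<phi> x)) < \<epsilon>"
    proof (intro allI impI)
      fix \<epsilon> :: real assume "\<epsilon> > 0"
      then obtain \<phi> where "fin_supp \<phi>"
        "sqrt (energy w mu pot (\<lambda>x. u x - \<phi> x) + L2_norm_sq mu (\<lambda>x. u x - \<phi> x)) < \<epsilon>"
        using ap by blast
      moreover have "sqrt (energy w mu (\<lambda>_. 0) (\<lambda>x. u x - \<phi> x) + L2_norm_sq mu (\<lambda>x. u x - \<phi> x))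
          \<le> sqrt (energy w mu pot (\<lambda>x. u x - \<phi> x) + L2_norm_sq mu (\<lambda>x. u x - \<phi> x))"
        using le by simp
      ultimately show "\<exists>\<phi>. fin_supp \<phi> \<and>
             sqrt (energy w mu (\<lambda>_. 0) (\<lambda>x. u x - \<phi> x) + L2_norm_sq mu (\<lambda>x. u x - \<phi> x)) < \<epsilon>"
        by (meson le_less_trans)
    qed
    have ef0: "energy_finite w mu (\<lambda>_. 0) u" using ef by (simp add: energy_finite_def)
    have "in_L2 (\<lambda>x. pot x * mu x) u" using ef by (simp add: energy_finite_def in_L2_def eqP)
    then show "u \<in> form_domain w mu (\<lambda>_. 0) \<inter> {u. in_L2 (\<lambda>x. pot x * mu x) u}"
      using L2 ef0 ap0 by (simp add: form_domain_def)
  next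
    fix u assume u: "u \<in> form_domain w mu (\<lambda>_. 0) \<inter> {u. in_L2 (\<lambda>x. pot x * mu x) u}"
    have L2: "in_L2 mu u" and ef: "energy_finite w mu (\<lambda>_. 0) u"
      and ap: "\<forall>\<epsilon>>0. \<exists>\<phi>. fin_supp \<phi> \<and>
             sqrt (energy w mu (\<lambda>_. 0) (\<lambda>x. u x - \<phi> x) + L2_norm_sq mu (\<lambda>x. u x - \<phi> x)) < \<epsilon>"
      and LP: "in_L2 (\<lambda>x. pot x * mu x) u"
      using u by (simp_all add: form_domain_def)
    have uE: "(\<lambda>(x,y). w x y * (u x - u y)\<^sup>2) summable_on UNIV" using ef by (simp add: energy_finite_def)
    have uP: "(\<lambda>x. pot x * (u x)\<^sup>2 * mu x) summable_on UNIV" using LP by (simp add: in_L2_def eqP)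
    have uL2: "(\<lambda>x. (u x)\<^sup>2 * mu x) summable_on UNIV" using L2 by (simp add: in_L2_def)
    have approx: "\<exists>\<phi>. fin_supp \<phi> \<and> energy w mu (\<lambda>_. 0) (\<lambda>x. u x - \<phi> x) + L2_norm_sq mu (\<lambda>x. u x - \<phi> x) < \<delta>"
      if "\<delta> > 0" for \<delta>
    proof -
      have sp: "sqrt \<delta> > 0" using that by simp
      from ap sp obtain \<phi> where "fin_supp \<phi>"
        "sqrt (energy w mu (\<lambda>_. 0) (\<lambda>x. u x - \<phi> x) + L2_norm_sq mu (\<lambda>x. u x - \<phi> x)) < sqrt \<delta>"
        by blast
      then show ?thesis by (auto simp: real_sqrt_less_iff)
    qed
    have ap2: "\<forall>\<epsilon>>0. \<exists>\<phi>. fin_supp \<phi> \<and>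
             sqrt (energy w mu pot (\<lambda>x. u x - \<phi> x) + L2_norm_sq mu (\<lambda>x. u x - \<phi> x)) < \<epsilon>"
    proof (intro allI impI)
      fix \<epsilon> :: real assume e: "\<epsilon> > 0"
      obtain \<psi> where "fin_supp \<psi>" "energy w mu pot (\<lambda>x. u x - \<psi> x) + L2_norm_sq mu (\<lambda>x. u x - \<psi> x) < \<epsilon>\<^sup>2"
        using main[of w mu pot u "\<epsilon>\<^sup>2", OF wsym wnn lf mup potnn uL2 uE uP approx] e by auto
      moreover have "sqrt (\<epsilon>\<^sup>2) = \<epsilon>" using e by simp
      ultimately show "\<exists>\<phi>. fin_supp \<phi> \<and>
             sqrt (energy w mu pot (\<lambda>x. u x - \<phi> x) + L2_norm_sq mu (\<lambda>x. u x - \<phi> x)) < \<epsilon>"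
        by (metis real_sqrt_less_iff)
    qed
    have "energy_finite w mu pot u" using uE uP by (simp add: energy_finite_def)
    then show "u \<in> form_domain w mu pot" using L2 ap2 by (simp add: form_domain_def)
  qed
qed

end
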